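(* Let $G=(V,E)$ be a finite graph satisfying the $CD\psi(n,-K)$ condition for some $n>0$, $K>0$, where $\psi:(0,+\infty)\to\mathbb R$ is a concave $C^1$ function with $\psi>0$ and $\psi'>0$ (and $\psi(1)D_w$ in the image of $\psi$). Let $u$ be a positive solution of the heat equation $\partial_t u=\Delta u$ on $V$. Then for all vertices and all $t>0$, $$\Gamma^{\psi}(u)-\psi'(1)\frac{\partial_{t}u}{u}\leq \frac{n}{2t}+\sqrt{nKC},\qquad C=D_{\mu}\left[\psi'(1)\left(\psi^{-1}(\psi(1)D_{w})-1\right)+\psi(1)\right].$$
   Context: Graphs: $G=(V,E)$ is a connected, locally finite graph; each edge $xy$ carries a weight $w_{xy}>0$ (possibly asymmetric), and $\mu:V\to(0,\infty)$ is a vertex measure; $y\sim x$ means $xy\in E$, $\deg(x)=\sum_{y\sim x}w_{xy}<\infty$, $D_\mu=\sup_{x}\deg(x)/\mu(x)$, $D_w=\sup_{x\sim y}\deg(x)/w_{xy}$. Laplacian: $\Delta f(x)=\frac{1}{\mu(x)}\sum_{y\sim x}w_{xy}(f(y)-f(x))$. For $\psi:(0,\infty)\to\mathbb R$ and $f:V\to(0,\infty)$: $\Delta^\psi f(x)=\Delta\big[\psi\big(\tfrac{f}{f(x)}\big)\big](x)$; for $C^1$ $\psi$, $\overline\psi(s)=\psi'(1)(s-1)-(\psi(s)-\psi(1))$ and $\Gamma^\psi f=\Delta^{\overline\psi}f$; $(\Omega^\psi f)(x)=\Delta\big[\psi'\big(\tfrac{f}{f(x)}\big)\tfrac{f}{f(x)}\big(\tfrac{\Delta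 f}{f}-\tfrac{\Delta f(x)}{f(x)}\big)\big](x)$; $2\Gamma_2^\psi(f)=\Omega^\psi f+\frac{\Delta f\,\Delta^\psi f}{f}-\frac{\Delta(f\Delta^\psi f)}{f}$. The graph satisfies $CD\psi(n,K)$ if for every $f:V\to(0,\infty)$ and every vertex, $\Gamma_2^\psi(f)\ge\frac1n(\Delta^\psi f)^2+K\Gamma^\psi(f)$. $\psi^{-1}$ is the inverse function of $\psi$. A positive solution of the heat equation on $U\subset V$ is $u:V\times[0,\infty)\to(0,\infty)$, continuously differentiable in $t$, with $\partial_t u=\Delta u$ at every $x\in U$, $t\ge0$; operators are applied to $u(\cdot,t)$ at each fixed time. *)

theory Defs
  imports "HOL-Analysis.Analysis"
begin

text \<open>A finite weighted graph on the finite vertex type 'a: E is the (undirected,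
loop-free) edge relation, w the (possibly asymmetric) positive edge weights,
mu the positive vertex measure.\<close>

definition weighted_graph :: "('a::finite \<Rightarrow> 'a \<Rightarrow> bool) \<Rightarrow> ('a \<Rightarrow> 'a \<Rightarrow> real) \<Rightarrow> ('a \<Rightarrow> real) \<Rightarrow> bool" where
  "weighted_graph E w mu \<longleftrightarrow>
     (\<forall>x y. E x y \<longrightarrow> E y x) \<and> (\<forall>x. \<not> E x x) \<and>
     (\<forall>x y. E x y \<longrightarrow> w x y > 0) \<and> (\<forall>x. mu x > 0) \<and>
     (\<forall>x y. (x, y) \<in> ({(a, b). E a b})\<^sup>*)"

definition deg :: "('a::finite \<Rightarrow> 'a \<Rightarrow> bool) \<Rightarrow> ('a \<Rightarrow> 'a \<Rightarrow> real) \<Rightarrow> 'a \<Rightarrow> real" where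
  "deg E w x = (\<Sum>y\<in>{y. E x y}. w x y)"

definition D_mu :: "('a::finite \<Rightarrow> 'a \<Rightarrow> bool) \<Rightarrow> ('a \<Rightarrow> 'a \<Rightarrow> real) \<Rightarrow> ('a \<Rightarrow> real) \<Rightarrow> real" where
  "D_mu E w mu = (SUP x. deg E w x / mu x)"

definition D_w :: "('a::finite \<Rightarrow> 'a \<Rightarrow> bool) \<Rightarrow> ('a \<Rightarrow> 'a \<Rightarrow> real) \<Rightarrow> real" where
  "D_w E w = Sup {deg E w x / w x y | x y. E x y}"

definition lap :: "('a::finite \<Rightarrow> 'a \<Rightarrow> bool) \<Rightarrow> ('a \<Rightarrow> 'a \<Rightarrow> real) \<Rightarrow> ('a \<Rightarrow> real) \<Rightarrow> ('a \<Rightarrow> real) \<Rightarrow> 'a \<Rightarrow> real" where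
  "lap E w mu f x = (1 / mu x) * (\<Sum>y\<in>{y. E x y}. w x y * (f y - f x))"

definition lap_psi :: "('a::finite \<Rightarrow> 'a \<Rightarrow> bool) \<Rightarrow> ('a \<Rightarrow> 'a \<Rightarrow> real) \<Rightarrow> ('a \<Rightarrow> real) \<Rightarrow> (real \<Rightarrow> real) \<Rightarrow> ('a \<Rightarrow> real) \<Rightarrow> 'a \<Rightarrow> real" where
  "lap_psi E w mu \<psi> f x = lap E w mu (\<lambda>y. \<psi> (f y / f x)) x"

definition psi_bar :: "(real \<Rightarrow> real) \<Rightarrow> real \<Rightarrow> real" where
  "psi_bar \<psi> s = deriv \<psi> 1 * (s - 1) - (\<psi> s - \<psi> 1)"

definition Gamma_psi :: "('a::finite \<Rightarrow> 'a \<Rightarrow> bool) \<Rightarrow> ('a \<Rightarrow> 'a \<Rightarrow> real) \<Rightarrow> ('a \<Rightarrow> real) \<Rightarrow> (real \<Rightarrow> real) \<Rightarrow> ('a \<Rightarrow> real) \<Rightarrow> 'a \<Rightarrow> real" where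
  "Gamma_psi E w mu \<psi> f x = lap_psi E w mu (psi_bar \<psi>) f x"

definition Omega_psi :: "('a::finite \<Rightarrow> 'a \<Rightarrow> bool) \<Rightarrow> ('a \<Rightarrow> 'a \<Rightarrow> real) \<Rightarrow> ('a \<Rightarrow> real) \<Rightarrow> (real \<Rightarrow> real) \<Rightarrow> ('a \<Rightarrow> real) \<Rightarrow> 'a \<Rightarrow> real" where
  "Omega_psi E w mu \<psi> f x =
     lap E w mu (\<lambda>y. deriv \<psi> (f y / f x) * (f y / f x) *
                      (lap E w mu f y / f y - lap E w mu f x / f x)) x"

definition Gamma2_psi :: "('a::finite \<Rightarrow> 'a \<Rightarrow> bool) \<Rightarrow> ('a \<Rightarrow> 'a \<Rightarrow> real) \<Rightarrow> ('a \<Rightarrow> real) \<Rightarrow> (real \<Rightarrow> real) \<Rightarrow> ('a \<Rightarrow> real) \<Rightarrow> 'a \<Rightarrow> real" where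
  "Gamma2_psi E w mu \<psi> f x =
     (Omega_psi E w mu \<psi> f x
      + lap E w mu f x * lap_psi E w mu \<psi> f x / f x
      - lap E w mu (\<lambda>y. f y * lap_psi E w mu \<psi> f y) x / f x) / 2"

definition CD_psi :: "('a::finite \<Rightarrow> 'a \<Rightarrow> bool) \<Rightarrow> ('a \<Rightarrow> 'a \<Rightarrow> real) \<Rightarrow> ('a \<Rightarrow> real) \<Rightarrow> (real \<Rightarrow> real) \<Rightarrow> real \<Rightarrow> real \<Rightarrow> bool" where
  "CD_psi E w mu \<psi> n K \<longleftrightarrow>
     (\<forall>f x. (\<forall>y. f y > 0) \<longrightarrow>
        Gamma2_psi E w mu \<psi> f x \<ge> (1 / n) * (lap_psi E w mu \<psi> f x)\<^sup>2 + K * Gamma_psi E w mu \<psi> f x)"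

definition heat_solution :: "('a::finite \<Rightarrow> 'a \<Rightarrow> bool) \<Rightarrow> ('a \<Rightarrow> 'a \<Rightarrow> real) \<Rightarrow> ('a \<Rightarrow> real) \<Rightarrow> ('a \<Rightarrow> real \<Rightarrow> real) \<Rightarrow> bool" where
  "heat_solution E w mu u \<longleftrightarrow>
     (\<forall>x t. t \<ge> 0 \<longrightarrow> u x t > 0) \<and>
     (\<forall>x t. t \<ge> 0 \<longrightarrow>
        ((\<lambda>s. u x s) has_real_derivative lap E w mu (\<lambda>y. u y t) x) (at t within {0..})) \<and>
     (\<forall>x. continuous_on {0..} (\<lambda>t. lap E w mu (\<lambda>y. u y t) x))"

end

theory Submission
  imports Defs
begin

lemma psi_mono:
  fixes \<psi> :: "real \<Rightarrow> real"
  assumes diff: "\<forall>s>0. \<psi> differentiable (at s)" and dpos: "\<forall>s>0. deriv \<psi> s > 0"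
    and "0 < a" "a < b"
  shows "\<psi> a < \<psi> b"
proof -
  have "\<And>x. a \<le> x \<Longrightarrow> x \<le> b \<Longrightarrow> DERIV \<psi> x :> deriv \<psi> x"
    using diff assms(3) by (auto simp: DERIV_deriv_iff_real_differentiable)
  from MVT2[OF assms(4) this] obtain z where "a < z" "z < b" "\<psi> b - \<psi> a = (b - a) * deriv \<psi> z"
    by blast
  moreover have "deriv \<psi> z > 0" using dpos \<open>a < z\<close> assms(3) by auto
  ultimately show ?thesis using assms(4) mult_pos_pos[of "b - a" "deriv \<psi> z"] by linarith
qed

lemma lap_prod_ge:
  assumes mu: "mu x > 0" and wp: "\<forall>y. E x y \<longrightarrow> w x y > 0"
    and fp: "\<forall>y. f y > 0" and h: "\<forall>y. h y \<ge> h x"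
  shows "lap E w mu (\<lambda>y. f y * h y) x \<ge> h x * lap E w mu f x"
proof -
  have eq: "\<And>y. w x y * (f y * h y - f x * h x) = w x y * f y * (h y - h x) + h x * (w x y * (f y - f x))"
    by (simp add: algebra_simps)
  have "lap E w mu (\<lambda>y. f y * h y) x = (1/mu x) * (\<Sum>y\<in>{y. E x y}. w x y * f y * (h y - h x))
         + h x * lap E w mu f x"
    unfolding lap_def eq sum.distrib sum_distrib_left[symmetric] by (simp add: algebra_simps)
  moreover have "(\<Sum>y\<in>{y. E x y}. w x y * f y * (h y - h x)) \<ge> 0"
    apply (rule sum_nonneg) using wp fp h by (simp add: less_imp_le)
  ultimately show ?thesis using mu by simp
qed

lemma Gamma_eq:
  assumes "f x > 0" "mu x > 0"
  shows "Gamma_psi E w mu \<psi> f x = deriv \<psi> 1 * lap E w mu f x / f x - lap_psi E w mu \<psi> f x"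
proof -
  have eq: "\<And>y. w x y * (psi_bar \<psi> (f y / f x) - psi_bar \<psi> (f x / f x))
     = (deriv \<psi> 1 / f x) * (w x y * (f y - f x)) - w x y * (\<psi> (f y / f x) - \<psi> (f x / f x))"
    using assms by (simp add: psi_bar_def field_simps)
  show ?thesis
    unfolding Gamma_psi_def lap_psi_def lap_def eq sum_subtractf sum_distrib_left[symmetric]
    using assms by (simp add: field_simps)
qed

lemma H_deriv:
  fixes \<psi> :: "real \<Rightarrow> real"
  assumes heat: "heat_solution E w mu u" and diff: "\<forall>s>0. \<psi> differentiable (at s)"
    and t: "t \<ge> 0"
  shows "((\<lambda>s. lap_psi E w mu \<psi> (\<lambda>y. u y s) x) has_real_derivative
            Omega_psi E w mu \<psi> (\<lambda>y. u y t) x) (at t within {0..})"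
proof -
  have up: "\<And>y s. s \<ge> 0 \<Longrightarrow> u y s > 0" using heat by (simp add: heat_solution_def)
  have ud: "\<And>y. ((\<lambda>s. u y s) has_real_derivative lap E w mu (\<lambda>z. u z t) y) (at t within {0..})"
    using heat t by (simp add: heat_solution_def)
  define L where "L y = lap E w mu (\<lambda>z. u z t) y" for y
  have trm: "((\<lambda>s. w x y * (\<psi> (u y s / u x s) - \<psi> 1)) has_real_derivative
      w x y * (deriv \<psi> (u y t / u x t) * ((L y * u x t - u y t * L x) / (u x t * u x t))))
      (at t within {0..})" for y
  proof -
    have q: "((\<lambda>s. u y s / u x s) has_real_derivative (L y * u x t - u y t * L x) / (u x t * u x t))
       (at t within {0..})"
      unfolding L_def by (rule DERIV_divide[OF ud ud]) (use up[of t x] t in force)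
    have "DERIV \<psi> (u y t / u x t) :> deriv \<psi> (u y t / u x t)"
      using diff up t by (simp add: DERIV_deriv_iff_real_differentiable)
    from DERIV_chain2[OF this q] have "((\<lambda>s. \<psi> (u y s / u x s)) has_real_derivative
       deriv \<psi> (u y t / u x t) * ((L y * u x t - u y t * L x) / (u x t * u x t))) (at t within {0..})" .
    from DERIV_cmult[OF DERIV_diff[OF this DERIV_const[of "\<psi> 1"]], of "w x y"]
    show ?thesis by simp
  qed
  have tot: "((\<lambda>s. (1 / mu x) * (\<Sum>y\<in>{y. E x y}. w x y * (\<psi> (u y s / u x s) - \<psi> 1)))
     has_real_derivative (1 / mu x) * (\<Sum>y\<in>{y. E x y}.
        w x y * (deriv \<psi> (u y t / u x t) * ((L y * u x t - u y t * L x) / (u x t * u x t)))))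
      (at t within {0..})"
    by (rule DERIV_cmult, rule DERIV_sum, rule trm)
  have val: "Omega_psi E w mu \<psi> (\<lambda>y. u y t) x = (1 / mu x) * (\<Sum>y\<in>{y. E x y}.
        w x y * (deriv \<psi> (u y t / u x t) * ((L y * u x t - u y t * L x) / (u x t * u x t))))"
  proof -
    have "\<And>y. w x y * (deriv \<psi> (u y t / u x t) * (u y t / u x t) * (L y / u y t - L x / u x t)
       - deriv \<psi> (u x t / u x t) * (u x t / u x t) * (L x / u x t - L x / u x t))
       = w x y * (deriv \<psi> (u y t / u x t) * ((L y * u x t - u y t * L x) / (u x t * u x t)))"
      using up[OF t] by (simp add: field_simps) (metis less_irrefl)
    then show ?thesis unfolding Omega_psi_def lap_def[of E w mu "\<lambda>y. _ y * _ y * _ y"] L_def by simp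
  qed
  show ?thesis unfolding val
  proof (rule has_field_derivative_transform_within[OF tot, of 1])
    fix s :: real assume "s \<in> {0..}"
    then have "u x s > 0" using up by simp
    then show "1 / mu x * (\<Sum>y\<in>{y. E x y}. w x y * (\<psi> (u y s / u x s) - \<psi> 1)) =
      lap_psi E w mu \<psi> (\<lambda>y. u y s) x" by (simp add: lap_psi_def lap_def)
  qed (use t in auto)
qed

lemma Dw_upper:
  assumes "E x y"
  shows "deg E w x / w x y \<le> D_w E w"
proof -
  have "{deg E w x / w x y |x y. E x y} = (\<lambda>(x,y). deg E w x / w x y) ` {(x,y). E x y}" by auto
  then have "finite {deg E w x / w x y |x y. E x y}" by simp
  then show ?thesis unfolding D_w_def using assms by (intro cSup_upper bdd_above_finite) auto
qed

lemma Dmu_upper: "deg E w x / mu x \<le> D_mu E w mu"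
  unfolding D_mu_def by (rule cSUP_upper) (auto intro: bdd_above_finite)

lemma deg_ge:
  assumes G: "weighted_graph E w mu" and "E x y"
  shows "w x y \<le> deg E w x"
  unfolding deg_def
  by (rule member_le_sum) (use assms in \<open>auto simp: weighted_graph_def less_imp_le\<close>)

lemma deg_nonneg:
  assumes G: "weighted_graph E w mu"
  shows "0 \<le> deg E w x"
  unfolding deg_def
  by (rule sum_nonneg) (use assms in \<open>auto simp: weighted_graph_def less_imp_le\<close>)

lemma Dmu_nonneg:
  assumes G: "weighted_graph E w mu"
  shows "0 \<le> D_mu E w mu"
proof -
  have "0 \<le> deg E w undefined / mu undefined"
    using deg_nonneg[OF G] G by (simp add: weighted_graph_def less_imp_le)
  also have "\<dots> \<le> D_mu E w mu" by (rule Dmu_upper)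
  finally show ?thesis .
qed

lemma R_props:
  fixes \<psi> :: "real \<Rightarrow> real"
  assumes G: "weighted_graph E w mu" and e: "E a b"
    and diff: "\<forall>s>0. \<psi> differentiable (at s)"
    and pos: "\<forall>s>0. \<psi> s > 0"
    and dpos: "\<forall>s>0. deriv \<psi> s > 0"
    and img: "\<psi> 1 * D_w E w \<in> \<psi> ` {0<..}"
  shows "the_inv_into {0<..} \<psi> (\<psi> 1 * D_w E w) \<ge> 1"
    and "\<psi> (the_inv_into {0<..} \<psi> (\<psi> 1 * D_w E w)) = \<psi> 1 * D_w E w"
    and "\<And>r. r > 0 \<Longrightarrow> \<psi> r \<le> \<psi> 1 * D_w E w \<Longrightarrow> r \<le> the_inv_into {0<..} \<psi> (\<psi> 1 * D_w E w)"
proof -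
  have inj: "inj_on \<psi> {0<..}"
  proof (rule inj_onI)
    fix p q :: real assume "p \<in> {0<..}" "q \<in> {0<..}" "\<psi> p = \<psi> q"
    then show "p = q" using psi_mono[OF diff dpos, of p q] psi_mono[OF diff dpos, of q p]
      by (cases p q rule: linorder_cases) auto
  qed
  define R where "R = the_inv_into {0<..} \<psi> (\<psi> 1 * D_w E w)"
  have R0: "R > 0" unfolding R_def using the_inv_into_into[OF inj img] by auto
  show psiR: "\<psi> (the_inv_into {0<..} \<psi> (\<psi> 1 * D_w E w)) = \<psi> 1 * D_w E w"
    using f_the_inv_into_f[OF inj img] .
  have "w a b > 0" using G e by (simp add: weighted_graph_def)
  then have "1 \<le> deg E w a / w a b" using deg_ge[OF G e] by simp
  also have "\<dots> \<le> D_w E w" by (rule Dw_upper[of E a b w, OF e])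
  finally have "\<psi> 1 \<le> \<psi> 1 * D_w E w" using pos by simp
  show le: "\<And>r. r > 0 \<Longrightarrow> \<psi> r \<le> \<psi> 1 * D_w E w \<Longrightarrow> r \<le> the_inv_into {0<..} \<psi> (\<psi> 1 * D_w E w)"
  proof (rule ccontr)
    fix r :: real assume "r > 0" "\<psi> r \<le> \<psi> 1 * D_w E w" "\<not> r \<le> the_inv_into {0<..} \<psi> (\<psi> 1 * D_w E w)"
    then show False using psi_mono[OF diff dpos R0, of r] psiR unfolding R_def by auto
  qed
  show "the_inv_into {0<..} \<psi> (\<psi> 1 * D_w E w) \<ge> 1"
    using le[of 1] pos \<open>\<psi> 1 \<le> \<psi> 1 * D_w E w\<close> by simp
qed

lemma C_nonneg:
  fixes \<psi> :: "real \<Rightarrow> real"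
  assumes G: "weighted_graph E w mu"
    and diff: "\<forall>s>0. \<psi> differentiable (at s)"
    and pos: "\<forall>s>0. \<psi> s > 0"
    and dpos: "\<forall>s>0. deriv \<psi> s > 0"
    and img: "\<psi> 1 * D_w E w \<in> \<psi> ` {0<..}"
  shows "0 \<le> D_mu E w mu * (deriv \<psi> 1 * (the_inv_into {0<..} \<psi> (\<psi> 1 * D_w E w) - 1) + \<psi> 1)"
proof (cases "\<exists>a b. E a b")
  case True
  then obtain a b where e: "E a b" by blast
  have "0 \<le> deriv \<psi> 1 * (the_inv_into {0<..} \<psi> (\<psi> 1 * D_w E w) - 1) + \<psi> 1"
    using R_props(1)[OF G e diff pos dpos img] pos dpos
    by (simp add: add_nonneg_nonneg less_imp_le)
  then show ?thesis using Dmu_nonneg[OF G] by simp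
next
  case False
  then have "\<And>x. deg E w x = 0" by (simp add: deg_def)
  then have "D_mu E w mu = 0" by (simp add: D_mu_def)
  then show ?thesis by simp
qed

lemma Gamma_bound:
  fixes \<psi> :: "real \<Rightarrow> real"
  assumes G: "weighted_graph E w mu"
    and diff: "\<forall>s>0. \<psi> differentiable (at s)"
    and pos: "\<forall>s>0. \<psi> s > 0"
    and dpos: "\<forall>s>0. deriv \<psi> s > 0"
    and img: "\<psi> 1 * D_w E w \<in> \<psi> ` {0<..}"
    and fp: "\<forall>y. f y > 0" and H: "lap_psi E w mu \<psi> f x \<le> 0"
  shows "Gamma_psi E w mu \<psi> f x \<le>
     D_mu E w mu * (deriv \<psi> 1 * (the_inv_into {0<..} \<psi> (\<psi> 1 * D_w E w) - 1) + \<psi> 1)"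
proof (cases "\<exists>b. E x b")
  case False
  then have "Gamma_psi E w mu \<psi> f x = 0" by (simp add: Gamma_psi_def lap_psi_def lap_def)
  then show ?thesis using C_nonneg[OF G diff pos dpos img] by simp
next
  case True
  then obtain b where e: "E x b" by blast
  define R where "R = the_inv_into {0<..} \<psi> (\<psi> 1 * D_w E w)"
  define B where "B = deriv \<psi> 1 * (R - 1) + \<psi> 1"
  have mu: "mu x > 0" and wp: "\<And>y. E x y \<Longrightarrow> w x y > 0" using G by (auto simp: weighted_graph_def)
  have fx: "f x / f x = 1" using fp by (simp add: less_imp_neq[symmetric])
  have sum0: "(\<Sum>y\<in>{y. E x y}. w x y * (\<psi> (f y / f x) - \<psi> 1)) \<le> 0"
    using H mu unfolding lap_psi_def lap_def fx by (simp add: divide_le_0_iff)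
  have sumle: "(\<Sum>y\<in>{y. E x y}. w x y * \<psi> (f y / f x)) \<le> \<psi> 1 * deg E w x"
    using sum0 by (simp add: deg_def right_diff_distrib sum_subtractf sum_distrib_left mult.commute)
  have rle: "f y / f x \<le> R" if y: "E x y" for y
  proof -
    have "w x y * \<psi> (f y / f x) \<le> (\<Sum>y\<in>{y. E x y}. w x y * \<psi> (f y / f x))"
      by (rule member_le_sum) (use y wp pos fp in \<open>auto intro!: mult_nonneg_nonneg less_imp_le\<close>)
    with sumle have "w x y * \<psi> (f y / f x) \<le> \<psi> 1 * deg E w x" by linarith
    then have "\<psi> (f y / f x) \<le> \<psi> 1 * (deg E w x / w x y)"
      using wp[OF y] by (simp add: field_simps)
    also have "\<dots> \<le> \<psi> 1 * D_w E w"
      using mult_left_mono[OF Dw_upper[of E x y w, OF y], of "\<psi> 1"] pos less_imp_le zero_less_one by metis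
    finally show ?thesis unfolding R_def
      using R_props(3)[OF G e diff pos dpos img] fp by simp
  qed
  have pt: "w x y * (psi_bar \<psi> (f y / f x) - psi_bar \<psi> (f x / f x)) \<le> w x y * B"
    if y: "E x y" for y
  proof -
    have "psi_bar \<psi> (f y / f x) \<le> B"
      unfolding psi_bar_def B_def using rle[OF y] dpos pos fp
      by (smt (verit, best) divide_pos_pos mult_left_mono zero_less_one)
    moreover have "psi_bar \<psi> (f x / f x) = 0" unfolding fx psi_bar_def by simp
    ultimately show ?thesis using wp[OF y] by (simp add: mult_left_mono less_imp_le)
  qed
  have "Gamma_psi E w mu \<psi> f x \<le> (1 / mu x) * (\<Sum>y\<in>{y. E x y}. w x y * B)"
  proof -
    have "(\<Sum>y\<in>{y. E x y}. w x y * (psi_bar \<psi> (f y / f x) - psi_bar \<psi> (f x / f x)))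
       \<le> (\<Sum>y\<in>{y. E x y}. w x y * B)" by (rule sum_mono) (use pt in auto)
    then show ?thesis unfolding Gamma_psi_def lap_psi_def lap_def
      using mu by (intro mult_left_mono) auto
  qed
  also have "\<dots> = (deg E w x / mu x) * B" by (simp add: deg_def sum_distrib_right)
  also have "\<dots> \<le> D_mu E w mu * B"
  proof (rule mult_right_mono[OF Dmu_upper])
    show "0 \<le> B" unfolding B_def R_def
      using R_props(1)[OF G e diff pos dpos img] pos dpos
      by (simp add: add_nonneg_nonneg less_imp_le)
  qed
  finally show ?thesis unfolding B_def R_def .
qed

lemma within_to_at:
  fixes f :: "real \<Rightarrow> real"
  assumes "(f has_real_derivative D) (at t within {0..})" "t > 0"
  shows "(f has_real_derivative D) (at t)"
proof -
  have "(f has_real_derivative D) (at t within {0<..})"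
    by (rule has_field_derivative_subset[OF assms(1)]) auto
  then show ?thesis using at_within_open[of t "{0<..}"] assms(2) by simp
qed

lemma alg:
  fixes a n q :: real
  assumes "n > 0" "q \<ge> 0" "(2 / n) * a^2 - 2 * q^2 / n \<le> a"
  shows "a \<le> n / 2 + q"
proof (rule ccontr)
  assume "\<not> a \<le> n / 2 + q"
  then have a: "a > n/2 + q" by simp
  have "2 * a^2 - 2 * q^2 \<le> n * a"
    using assms(3) assms(1) by (simp add: field_simps)
  moreover have "a * (2*a - n) > a * (2*q)"
    using a assms by (intro mult_strict_left_mono) auto
  moreover have "a * (2*q) \<ge> 2 * q^2" using a assms
    by (simp add: power2_eq_square mult_right_mono)
  ultimately show False by (simp add: algebra_simps power2_eq_square)
qed

theorem mainTheorem6: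
  fixes E :: "'a::finite \<Rightarrow> 'a \<Rightarrow> bool" and w :: "'a \<Rightarrow> 'a \<Rightarrow> real" and mu :: "'a \<Rightarrow> real"
    and \<psi> :: "real \<Rightarrow> real" and u :: "'a \<Rightarrow> real \<Rightarrow> real" and n K :: real
  assumes G: "weighted_graph E w mu"
    and n: "n > 0" and K: "K > 0"
    and CD: "CD_psi E w mu \<psi> n (- K)"
    and concave: "concave_on {0<..} \<psi>"
    and diff: "\<forall>s>0. \<psi> differentiable (at s)"
    and C1: "continuous_on {0<..} (deriv \<psi>)"
    and pos: "\<forall>s>0. \<psi> s > 0"
    and dpos: "\<forall>s>0. deriv \<psi> s > 0"
    and img: "\<psi> 1 * D_w E w \<in> \<psi> ` {0<..}"
    and heat: "heat_solution E w mu u"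
  shows "\<forall>x. \<forall>t>0.
     Gamma_psi E w mu \<psi> (\<lambda>y. u y t) x - deriv \<psi> 1 * (deriv (\<lambda>s. u x s) t / u x t)
       \<le> n / (2 * t) + sqrt (n * K *
            (D_mu E w mu * (deriv \<psi> 1 * (the_inv_into {0<..} \<psi> (\<psi> 1 * D_w E w) - 1) + \<psi> 1)))"
proof (intro allI impI)
  fix x :: 'a and T :: real
  assume T: "T > 0"
  define C where "C = D_mu E w mu * (deriv \<psi> 1 * (the_inv_into {0<..} \<psi> (\<psi> 1 * D_w E w) - 1) + \<psi> 1)"
  define s0 where "s0 = sqrt (n * K * C)"
  define H where "H s y = lap_psi E w mu \<psi> (\<lambda>z. u z s) y" for s y
  define Om where "Om s y = Omega_psi E w mu \<psi> (\<lambda>z. u z s) y" for s y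
  define F where "F y s = - s * H s y" for y s
  have C0: "C \<ge> 0" unfolding C_def by (rule C_nonneg[OF G diff pos dpos img])
  have s00: "s0 \<ge> 0" unfolding s0_def using C0 n K by simp
  have s0sq: "s0^2 = n * K * C" unfolding s0_def using C0 n K by simp
  have up: "\<And>y s. s \<ge> 0 \<Longrightarrow> u y s > 0" using heat by (simp add: heat_solution_def)
  have Hder: "((\<lambda>s. H s y) has_real_derivative Om s y) (at s within {0..})" if "s \<ge> 0" for y s
    unfolding H_def Om_def by (rule H_deriv[OF heat diff that])
  have Fder: "((\<lambda>s. F y s) has_real_derivative (- H s y - s * Om s y)) (at s within {0..})"
    if "s \<ge> 0" for y s
  proof -
    have "((\<lambda>s. (- s) * H s y) has_real_derivative (-1) * H s y + Om s y * (- s)) (at s within {0..})"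
      by (rule DERIV_mult[OF DERIV_minus[OF DERIV_ident] Hder[OF that]])
    then show ?thesis unfolding F_def by (simp add: algebra_simps)
  qed
  have Fcont: "continuous_on {0..T} (F y)" for y
  proof -
    have "\<And>s. s \<in> {0..T} \<Longrightarrow> continuous (at s within {0..T}) (F y)"
    proof -
      fix s :: real assume s: "s \<in> {0..T}"
      have "continuous (at s within {0..}) (F y)"
        using DERIV_continuous[OF Fder[of s y]] s by simp
      then show "continuous (at s within {0..T}) (F y)"
        by (rule continuous_within_subset) auto
    qed
    then show ?thesis by (simp add: continuous_on_eq_continuous_within)
  qed
  have "\<forall>y. \<exists>ty\<in>{0..T}. \<forall>s\<in>{0..T}. F y s \<le> F y ty"
    using continuous_attains_sup[OF compact_Icc _ Fcont] T by auto
  then obtain tt where tt: "\<And>y. tt y \<in> {0..T}" "\<And>y s. s \<in> {0..T} \<Longrightarrow> F y s \<le> F y (tt y)"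
    by metis
  define M where "M = Max (range (\<lambda>y. F y (tt y)))"
  have "M \<in> range (\<lambda>y. F y (tt y))" unfolding M_def by (rule Max_in) auto
  then obtain x0 where x0: "M = F x0 (tt x0)" by auto
  have Mge: "\<And>y. F y (tt y) \<le> M" unfolding M_def by (rule Max_ge) auto
  define t0 where "t0 = tt x0"
  have t0T: "0 \<le> t0" "t0 \<le> T" using tt(1)[of x0] unfolding t0_def by auto
  have key: "F x0 t0 \<le> n / 2 + t0 * s0"
  proof (cases "F x0 t0 \<le> 0")
    case True
    have "t0 * s0 \<ge> 0" using t0T s00 by simp
    then show ?thesis using n True by linarith
  next
    case False
    then have Fpos: "F x0 t0 > 0" by simp
    have t0pos: "t0 > 0" using Fpos t0T unfolding F_def by (cases "t0 = 0") auto
    have Hneg: "H t0 x0 < 0" using Fpos t0pos unfolding F_def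
      by (simp add: mult_less_0_iff)
    define Fd where "Fd = - H t0 x0 - t0 * Om t0 x0"
    have Fdat: "((\<lambda>s. F x0 s) has_real_derivative Fd) (at t0)"
      unfolding Fd_def by (rule within_to_at[OF Fder t0pos]) (use t0T in simp)
    have Fd0: "Fd \<ge> 0"
    proof (rule ccontr)
      assume "\<not> Fd \<ge> 0"
      then have "Fd < 0" by simp
      from DERIV_neg_dec_left[OF Fdat this] obtain d where d: "d > 0"
        "\<forall>h>0. h < d \<longrightarrow> F x0 t0 < F x0 (t0 - h)" by blast
      define h where "h = min (d/2) t0"
      have "h > 0" "h < d" "h \<le> t0" using d t0pos unfolding h_def by auto
      then have "F x0 t0 < F x0 (t0 - h)" using d by auto
      moreover have "F x0 (t0 - h) \<le> F x0 t0"
        using tt(2)[of "t0 - h" x0] \<open>h > 0\<close> \<open>h \<le> t0\<close> t0T unfolding t0_def by auto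
      ultimately show False by simp
    qed
    have Hge: "H t0 y \<ge> H t0 x0" for y
    proof -
      have "F y t0 \<le> F x0 t0"
        using tt(2)[of t0 y] t0T Mge[of y] x0 unfolding t0_def by fastforce
      then have "t0 * H t0 x0 \<le> t0 * H t0 y" unfolding F_def by simp
      then show ?thesis using t0pos by simp
    qed
    define f where "f y = u y t0" for y
    have fp: "\<forall>y. f y > 0" unfolding f_def using up t0T by simp
    have mu: "mu x0 > 0" and wp: "\<forall>y. E x0 y \<longrightarrow> w x0 y > 0" using G by (auto simp: weighted_graph_def)
    have prod: "lap E w mu (\<lambda>y. f y * H t0 y) x0 \<ge> H t0 x0 * lap E w mu f x0"
      by (rule lap_prod_ge[of mu x0 E w f "\<lambda>y. H t0 y", OF mu wp fp]) (use Hge in simp)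
    have Hf: "\<And>y. lap_psi E w mu \<psi> f y = H t0 y" unfolding H_def f_def by simp
    have Omf: "Omega_psi E w mu \<psi> f x0 = Om t0 x0" unfolding Om_def f_def by simp
    have CDf: "Gamma2_psi E w mu \<psi> f x0 \<ge> (1 / n) * (H t0 x0)\<^sup>2 + (- K) * Gamma_psi E w mu \<psi> f x0"
      using CD[unfolded CD_psi_def, rule_format, of f x0] fp Hf[of x0] by simp
    have Gb: "Gamma_psi E w mu \<psi> f x0 \<le> C" unfolding C_def
      by (rule Gamma_bound[OF G diff pos dpos img fp]) (use Hf Hneg in simp)
    have G2: "2 * Gamma2_psi E w mu \<psi> f x0 \<le> Om t0 x0"
    proof -
      have "lap E w mu f x0 * H t0 x0 / f x0 - lap E w mu (\<lambda>y. f y * H t0 y) x0 / f x0 \<le> 0"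
        using prod fp[rule_format, of x0] by (simp add: divide_right_mono diff_divide_distrib[symmetric] divide_le_0_iff mult.commute)
      then show ?thesis unfolding Gamma2_psi_def Hf Omf by simp
    qed
    have ineq1: "(1 / n) * (H t0 x0)\<^sup>2 - K * C \<le> Om t0 x0 / 2"
    proof -
      have "K * Gamma_psi E w mu \<psi> f x0 \<le> K * C" using Gb K by (simp add: mult_left_mono)
      then show ?thesis using CDf G2 by linarith
    qed
    have ineq2: "t0 * Om t0 x0 \<le> - H t0 x0" using Fd0 unfolding Fd_def by simp
    define a where "a = F x0 t0"
    have aeq: "a = - t0 * H t0 x0" unfolding a_def F_def by simp
    have "(2 / n) * a^2 - 2 * (t0 * s0)^2 / n \<le> a"
    proof -
      have "2 * t0^2 * ((1 / n) * (H t0 x0)\<^sup>2 - K * C) \<le> 2 * t0^2 * (Om t0 x0 / 2)"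
        using ineq1 by (intro mult_left_mono) auto
      also have "\<dots> = t0 * (t0 * Om t0 x0)" by (simp add: power2_eq_square)
      also have "\<dots> \<le> t0 * (- H t0 x0)" using ineq2 t0pos by (intro mult_left_mono) auto
      finally have "2 * t0^2 * ((1 / n) * (H t0 x0)\<^sup>2 - K * C) \<le> t0 * (- H t0 x0)" .
      moreover have "2 * (t0 * s0)^2 / n = 2 * t0^2 * K * C"
        using n s0sq by (simp add: power_mult_distrib)
      ultimately show ?thesis unfolding aeq using n
        by (simp add: power_mult_distrib algebra_simps)
    qed
    from alg[OF n _ this] show ?thesis using s00 t0pos unfolding a_def by simp
  qed
  have "F x T \<le> n / 2 + T * s0"
  proof -
    have "F x T \<le> F x (tt x)" using tt(2)[of T x] T by simp
    also have "\<dots> \<le> F x0 t0" using Mge[of x] x0 unfolding t0_def by simp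
    also have "\<dots> \<le> n / 2 + t0 * s0" by (rule key)
    also have "\<dots> \<le> n / 2 + T * s0" using t0T s00 by (simp add: mult_right_mono)
    finally show ?thesis .
  qed
  then have "- H T x \<le> n / (2 * T) + s0" unfolding F_def using T
    by (simp add: field_simps)
  moreover have "deriv (\<lambda>s. u x s) T = lap E w mu (\<lambda>y. u y T) x"
  proof (rule DERIV_imp_deriv, rule within_to_at[OF _ T])
    show "((\<lambda>s. u x s) has_real_derivative lap E w mu (\<lambda>y. u y T) x) (at T within {0..})"
      using heat T by (simp add: heat_solution_def)
  qed
  moreover have "Gamma_psi E w mu \<psi> (\<lambda>y. u y T) x
      = deriv \<psi> 1 * lap E w mu (\<lambda>y. u y T) x / u x T - H T x"
    unfolding H_def by (rule Gamma_eq) (use up T G in \<open>auto simp: weighted_graph_def\<close>)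
  ultimately show "Gamma_psi E w mu \<psi> (\<lambda>y. u y T) x - deriv \<psi> 1 * (deriv (\<lambda>s. u x s) T / u x T)
       \<le> n / (2 * T) + sqrt (n * K *
            (D_mu E w mu * (deriv \<psi> 1 * (the_inv_into {0<..} \<psi> (\<psi> 1 * D_w E w) - 1) + \<psi> 1)))"
    unfolding s0_def C_def by simp
qed

end
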